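(* Let $p$ be a prime, $n$ a non-negative integer and $A_*$ a graded commutative algebra over $\mathbb F_p$. Then $\Gamma_{n+1}(G_{p,n}(A_* ))=\{X\}$, i.e. the lower central series $G_{p,n}(A_* )\supset\Gamma_1(G_{p,n}(A_* ))\supset\cdots\supset\Gamma_{n+1}(G_{p,n}(A_* ))$ terminates in the trivial group. If $p$ is odd, then moreover $\Gamma_{n}(G_{p,n}^{ev}(A_* ))=\{X\}$.
   Context: Graded commutative means $ab=(-1)^{\deg a\deg b}ba$. If $p=2$, $G_2(A_* )$ is the set of power series $\alpha(X)=\sum_{i\ge0}\alpha_iX^{2^i}\in A_*[[X]]$ ($X$ of degree $-1$) with $\alpha_i\in A_{2^i-1}$ and $\alpha_0=1$. If $p$ is odd, let $\epsilon$ have degree $-1$ with $\epsilon^2=0$, $X$ degree $-2$, and $G_p(A_* )$ is the set of $\alpha(X)=\sum_{i\ge0}\alpha_iX^{p^i}\in (A_*\otimes_{\mathbb F_p}\mathbb F_p[\epsilon]/(\epsilon^2))[[X]]$ with $\alpha_i$ homogeneous of degree $2(p^i-1)$ and $\alpha_0-1\in(\epsilon)$; $G_p^{ev}(A_* )$ is the subgroup of those $\alpha$ with all $\alpha_i\in A_*$ and $\alpha_0=1$. The group law is $\alpha(X)\cdot\beta(X)=\beta(\alpha(X))$ (coefficient of $X^{p^i}$ equal to $\sum_{j=0}^i\alpha_{i-j}^{p^j}\beta_j$); the identity is $X$. $G_{p,n}(A_* )$ is the subgroup of $G_p(A_* )$ consisting of $\alpha(X)=\sum_i\alpha_iX^{p^i}$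 with $\alpha_i^{p^{n-i+1}}=0$ for $i=1,\dots,n$ and $\alpha_i=0$ for $i\ge n+1$, and for odd $p$, $G_{p,n}^{ev}(A_* )=G_{p,n}(A_* )\cap G_p^{ev}(A_* )$. For a group $G$, $\Gamma_0(G)=G$ and $\Gamma_{k+1}(G)=[\Gamma_k(G),G]$. *)

theory Defs
  imports "HOL-Algebra.Generated_Groups" "HOL-Computational_Algebra.Primes"
begin

text \<open>A graded algebra A_* over F_p is modelled as a (not necessarily commutative)
 ring type 'a with p * 1 = 0, together with its homogeneous pieces
 Ahom d (d an integer degree); A is the internal direct sum of the Ahom d.\<close>

definition graded_comm_algebra :: "nat \<Rightarrow> (int \<Rightarrow> 'a::ring_1 set) \<Rightarrow> bool" where
  "graded_comm_algebra p Ahom \<longleftrightarrow>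
     of_nat p = (0::'a) \<and>
     (\<forall>d. 0 \<in> Ahom d \<and> (\<forall>x\<in>Ahom d. \<forall>y\<in>Ahom d. x + y \<in> Ahom d \<and> - x \<in> Ahom d)) \<and>
     1 \<in> Ahom 0 \<and>
     (\<forall>d e. \<forall>x\<in>Ahom d. \<forall>y\<in>Ahom e. x * y \<in> Ahom (d + e)) \<and>
     (\<forall>d e. \<forall>x\<in>Ahom d. \<forall>y\<in>Ahom e. x * y = (-1) ^ nat \<bar>d * e\<bar> * (y * x)) \<and>
     (\<forall>x::'a. \<exists>!c::int \<Rightarrow> 'a. finite {d. c d \<noteq> 0} \<and> (\<forall>d. c d \<in> Ahom d) \<and>
                         x = sum c {d. c d \<noteq> 0})"

text \<open>An element a + \<epsilon> b is encoded as the pair (a, b).  All coefficients that get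
 multiplied in the group law have even total degree, i.e. a has even degree, and
 on such elements the graded tensor product is (a,b)(a',b') = (aa', ab' + ba').\<close>

definition dmult :: "'a::ring_1 \<times> 'a \<Rightarrow> 'a \<times> 'a \<Rightarrow> 'a \<times> 'a" where
  "dmult x y = (fst x * fst y, fst x * snd y + snd x * fst y)"

primrec dpow :: "'a::ring_1 \<times> 'a \<Rightarrow> nat \<Rightarrow> 'a \<times> 'a" where
  "dpow x 0 = (1, 0)"
| "dpow x (Suc m) = dmult x (dpow x m)"

text \<open>Power series \<alpha>(X) = \<Sum>_i \<alpha>_i X^(p^i) are encoded by their coefficient sequences.
 For p = 2 the \<epsilon>-parts are required to vanish (then coefficients lie in A_*).\<close>

type_synonym 'a pseries = "nat \<Rightarrow> 'a \<times> 'a"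

definition Xser :: "'a::ring_1 pseries" where
  "Xser = (\<lambda>i. if i = 0 then (1, 0) else (0, 0))"

text \<open>Group law: \<alpha>\<cdot>\<beta> = \<beta>(\<alpha>(X)), coefficient of X^(p^i) is \<Sum>_j \<alpha>_(i-j)^(p^j) \<beta>_j.\<close>
definition gmult :: "nat \<Rightarrow> 'a::ring_1 pseries \<Rightarrow> 'a pseries \<Rightarrow> 'a pseries" where
  "gmult p \<alpha> \<beta> = (\<lambda>i.
     ((\<Sum>j\<le>i. fst (dmult (dpow (\<alpha> (i - j)) (p ^ j)) (\<beta> j))),
      (\<Sum>j\<le>i. snd (dmult (dpow (\<alpha> (i - j)) (p ^ j)) (\<beta> j)))))"

definition coeff_deg :: "nat \<Rightarrow> nat \<Rightarrow> int" where
  "coeff_deg p i = (if p = 2 then int (2 ^ i) - 1 else 2 * (int (p ^ i) - 1))"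

text \<open>For p = 2: \<alpha>_i \<in> A_(2^i-1), \<alpha>_0 = 1.  For p odd: \<alpha>_i = a_i + \<epsilon> b_i
 homogeneous of degree 2(p^i-1), i.e. a_i \<in> A_(2(p^i-1)), b_i \<in> A_(2(p^i-1)+1)
 (\<epsilon> has degree -1), and \<alpha>_0 - 1 \<in> (\<epsilon>), i.e. a_0 = 1.\<close>
definition Gp :: "nat \<Rightarrow> (int \<Rightarrow> 'a::ring_1 set) \<Rightarrow> 'a pseries set" where
  "Gp p Ahom = {\<alpha>. fst (\<alpha> 0) = 1 \<and>
      (\<forall>i. fst (\<alpha> i) \<in> Ahom (coeff_deg p i)) \<and>
      (if p = 2 then (\<forall>i. snd (\<alpha> i) = 0) else (\<forall>i. snd (\<alpha> i) \<in> Ahom (coeff_deg p i + 1)))}"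

definition Gp_ev :: "nat \<Rightarrow> (int \<Rightarrow> 'a::ring_1 set) \<Rightarrow> 'a pseries set" where
  "Gp_ev p Ahom = {\<alpha> \<in> Gp p Ahom. \<forall>i. snd (\<alpha> i) = 0}"

definition Gpn :: "nat \<Rightarrow> (int \<Rightarrow> 'a::ring_1 set) \<Rightarrow> nat \<Rightarrow> 'a pseries set" where
  "Gpn p Ahom n = {\<alpha> \<in> Gp p Ahom.
      (\<forall>i. 1 \<le> i \<and> i \<le> n \<longrightarrow> dpow (\<alpha> i) (p ^ (n - i + 1)) = (0, 0)) \<and>
      (\<forall>i. n + 1 \<le> i \<longrightarrow> \<alpha> i = (0, 0))}"

definition Gpn_ev :: "nat \<Rightarrow> (int \<Rightarrow> 'a::ring_1 set) \<Rightarrow> nat \<Rightarrow> 'a pseries set" where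
  "Gpn_ev p Ahom n = Gpn p Ahom n \<inter> Gp_ev p Ahom"

definition grp :: "nat \<Rightarrow> 'a::ring_1 pseries set \<Rightarrow> 'a pseries monoid" where
  "grp p S = \<lparr>carrier = S, monoid.mult = gmult p, one = Xser\<rparr>"

fun lcs :: "('g, 'b) monoid_scheme \<Rightarrow> nat \<Rightarrow> 'g set" where
  "lcs G 0 = carrier G"
| "lcs G (Suc k) = generate G
     {x \<otimes>\<^bsub>G\<^esub> y \<otimes>\<^bsub>G\<^esub> inv\<^bsub>G\<^esub> x \<otimes>\<^bsub>G\<^esub> inv\<^bsub>G\<^esub> y | x y. x \<in> lcs G k \<and> y \<in> carrier G}"

end

theory Submission
  imports Defs
begin

definition cntr :: "'a::ring_1 \<Rightarrow> bool" where
  "cntr x \<longleftrightarrow> (\<forall>y. x * y = y * x)"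

lemma cntr_0[simp]: "cntr 0" and cntr_1[simp]: "cntr 1"
  unfolding cntr_def by auto

lemma cntrD: "cntr x \<Longrightarrow> x * y = y * x"
  unfolding cntr_def by blast

lemma cntr_add: "cntr x \<Longrightarrow> cntr y \<Longrightarrow> cntr (x + y)"
  unfolding cntr_def by (metis distrib_left distrib_right)
lemma cntr_diff: "cntr x \<Longrightarrow> cntr y \<Longrightarrow> cntr (x - y)"
  unfolding cntr_def by (metis left_diff_distrib right_diff_distrib)
lemma cntr_uminus: "cntr x \<Longrightarrow> cntr (- x)"
  unfolding cntr_def by (metis mult_minus_left mult_minus_right)
lemma cntr_mult: "cntr x \<Longrightarrow> cntr y \<Longrightarrow> cntr (x * y)"
  unfolding cntr_def by (metis mult.assoc)
lemma cntr_power: "cntr x \<Longrightarrow> cntr (x ^ n)"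
  by (induction n) (auto intro: cntr_mult)
lemma cntr_sum: "(\<And>j. j \<in> A \<Longrightarrow> cntr (f j)) \<Longrightarrow> cntr (sum f A)"
  by (induction A rule: infinite_finite_induct) (auto intro: cntr_add)
lemma cntr_of_nat: "cntr (of_nat n)"
  unfolding cntr_def by (simp add: mult_of_nat_commute)

lemma cntr_power_mult: "cntr x \<Longrightarrow> (x * y) ^ n = x ^ n * y ^ n"
proof (induction n)
  case (Suc n)
  have c: "cntr (x ^ n)" using Suc by (simp add: cntr_power)
  have "(x * y) ^ Suc n = x * y * (x ^ n * y ^ n)" using Suc by simp
  also have "... = x * (y * x ^ n) * y ^ n" by (simp add: mult.assoc)
  also have "... = x * (x ^ n * y) * y ^ n" using cntrD[OF c, of y] by simp
  also have "... = x ^ Suc n * y ^ Suc n" by (simp add: mult.assoc power_Suc2)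
  finally show ?case .
qed simp

typedef (overloaded) 'a cen = "{x::'a::ring_1. cntr x}" morphisms Rc Ac
  by (rule exI[of _ 0]) simp

lemma Rc_cntr: "cntr (Rc x)" using Rc[of x] by simp

instantiation cen :: (ring_1) comm_ring_1
begin
definition "0 = Ac 0"
definition "1 = Ac 1"
definition "x + y = Ac (Rc x + Rc y)"
definition "x - y = Ac (Rc x - Rc y)"
definition "- x = Ac (- Rc x)"
definition "x * y = Ac (Rc x * Rc y)"

lemma Rc_0: "Rc 0 = 0" by (simp add: zero_cen_def Ac_inverse)
lemma Rc_1: "Rc 1 = 1" by (simp add: one_cen_def Ac_inverse)
lemma Rc_add: "Rc (x + y) = Rc x + Rc y"
  by (simp add: plus_cen_def Ac_inverse cntr_add Rc_cntr)
lemma Rc_diff: "Rc (x - y) = Rc x - Rc y"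
  by (simp add: minus_cen_def Ac_inverse cntr_diff Rc_cntr)
lemma Rc_uminus: "Rc (- x) = - Rc x"
  by (simp add: uminus_cen_def Ac_inverse cntr_uminus Rc_cntr)
lemma Rc_mult: "Rc (x * y) = Rc x * Rc y"
  by (simp add: times_cen_def Ac_inverse cntr_mult Rc_cntr)

instance
proof
  fix a b c :: "'a cen"
  show "a * b * c = a * (b * c)" by (rule Rc_inject[THEN iffD1]) (simp add: Rc_mult mult.assoc)
  show "a * b = b * a" using cntrD[OF Rc_cntr[of a]] by (intro Rc_inject[THEN iffD1]) (simp add: Rc_mult)
  show "1 * a = a" by (rule Rc_inject[THEN iffD1]) (simp add: Rc_mult Rc_1)
  show "(a + b) * c = a * c + b * c" by (rule Rc_inject[THEN iffD1]) (simp add: Rc_mult Rc_add algebra_simps)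
  show "a + b + c = a + (b + c)" by (rule Rc_inject[THEN iffD1]) (simp add: Rc_add algebra_simps)
  show "a + b = b + a" by (rule Rc_inject[THEN iffD1]) (simp add: Rc_add algebra_simps)
  show "0 + a = a" by (rule Rc_inject[THEN iffD1]) (simp add: Rc_add Rc_0)
  show "- a + a = 0" by (rule Rc_inject[THEN iffD1]) (simp add: Rc_add Rc_0 Rc_uminus)
  show "a - b = a + - b" by (rule Rc_inject[THEN iffD1]) (simp add: Rc_add Rc_diff Rc_uminus)
  show "(0::'a cen) \<noteq> 1" by (metis Rc_0 Rc_1 zero_neq_one)
qed
end

lemma Rc_of_nat: "Rc (of_nat n) = of_nat n"
  by (induction n) (simp_all add: Rc_0 Rc_1 Rc_add)
lemma Rc_power: "Rc (x ^ n) = Rc x ^ n"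
  by (induction n) (simp_all add: Rc_1 Rc_mult)
lemma Rc_sum: "Rc (sum f A) = sum (\<lambda>j. Rc (f j)) A"
  by (induction A rule: infinite_finite_induct) (simp_all add: Rc_0 Rc_add)

lemma CHAR_cen:
  assumes "prime p" "of_nat p = (0::'a::ring_1)"
  shows "CHAR('a cen) = p"
proof -
  have "of_nat p = (0::'a cen)"
    using assms(2) by (intro Rc_inject[THEN iffD1]) (simp add: Rc_of_nat Rc_0)
  then have "CHAR('a cen) dvd p" by (simp add: of_nat_eq_0_iff_char_dvd)
  moreover have "CHAR('a cen) \<noteq> 1"
    by (metis of_nat_1 of_nat_CHAR one_neq_zero)
  ultimately show ?thesis using assms(1) by (metis prime_nat_iff)
qed

lemma frob_sum:
  fixes f :: "'b \<Rightarrow> 'a::ring_1"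
  assumes "prime p" "of_nat p = (0::'a)" "\<And>j. j \<in> A \<Longrightarrow> cntr (f j)"
  shows "(sum f A) ^ (p ^ e) = (\<Sum>j\<in>A. f j ^ (p ^ e))"
proof -
  have ch: "prime CHAR('a cen)" "p ^ e = CHAR('a cen) ^ e" using CHAR_cen[OF assms(1,2)] assms(1) by auto
  have fj: "\<And>j. j \<in> A \<Longrightarrow> Rc (Ac (f j)) = f j" using assms(3) by (simp add: Ac_inverse)
  have "sum f A = Rc (\<Sum>j\<in>A. Ac (f j))" by (simp add: Rc_sum fj)
  then have "(sum f A) ^ (p ^ e) = Rc ((\<Sum>j\<in>A. Ac (f j)) ^ (p ^ e))" by (simp add: Rc_power)
  also have "... = Rc (\<Sum>j\<in>A. Ac (f j) ^ (p ^ e))"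
    by (rule arg_cong[where f=Rc], rule freshmans_dream_sum'[OF ch])
  also have "... = (\<Sum>j\<in>A. f j ^ (p ^ e))" by (simp add: Rc_sum Rc_power fj)
  finally show ?thesis .
qed


lemma fst_dmult[simp]: "fst (dmult x y) = fst x * fst y"
  by (simp add: dmult_def)
lemma snd_dmult[simp]: "snd (dmult x y) = fst x * snd y + snd x * fst y"
  by (simp add: dmult_def)
lemma fst_dpow[simp]: "fst (dpow x m) = fst x ^ m"
  by (induction m) auto

lemma snd_dpow: "cntr (fst x) \<Longrightarrow> snd (dpow x m) = of_nat m * fst x ^ (m - 1) * snd x"
proof (induction m)
  case (Suc m)
  have c: "cntr (fst x ^ m)" using Suc.prems by (rule cntr_power)
  show ?case
  proof (cases m)
    case 0 then show ?thesis by (simp add: dmult_def)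
  next
    case (Suc k)
    have "snd (dpow x (Suc m)) = fst x * (of_nat m * fst x ^ (m - 1) * snd x) + snd x * fst x ^ m"
      using Suc.IH Suc.prems by simp
    also have "fst x * (of_nat m * fst x ^ (m - 1) * snd x) = of_nat m * (fst x * fst x ^ (m - 1)) * snd x"
      by (metis mult.assoc mult_of_nat_commute)
    also have "fst x * fst x ^ (m - 1) = fst x ^ m" using Suc by simp
    also have "snd x * fst x ^ m = fst x ^ m * snd x" using cntrD[OF c] by simp
    finally show ?thesis by (simp add: algebra_simps)
  qed
qed simp

lemma dpow_1[simp]: "dpow x 1 = x"
  by (simp add: dmult_def)

lemma snd_dpow_p: "cntr (fst x) \<Longrightarrow> of_nat p = (0::'a::ring_1) \<Longrightarrow> 0 < j \<Longrightarrow> snd (dpow (x::'a \<times> 'a) (p ^ j)) = 0"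
  by (simp add: snd_dpow of_nat_power zero_power)

lemma sum_two:
  fixes f :: "nat \<Rightarrow> 'b::comm_monoid_add"
  assumes "0 < i" "\<And>j. 0 < j \<Longrightarrow> j < i \<Longrightarrow> f j = 0"
  shows "(\<Sum>j\<le>i. f j) = f 0 + f i"
proof -
  obtain m where m: "i = Suc m" using assms(1) by (cases i) auto
  have "(\<Sum>j\<le>i. f j) = f 0 + (\<Sum>k<i. f (Suc k))" by (rule sum.atMost_shift)
  also have "(\<Sum>k<i. f (Suc k)) = (\<Sum>k<m. f (Suc k)) + f i" using m by simp
  also have "(\<Sum>k<m. f (Suc k)) = 0" using assms(2) m by (intro sum.neutral) auto
  finally show ?thesis by simp
qed

lemma gm_fst: "fst (gmult p \<alpha> \<beta> i) = (\<Sum>j\<le>i. fst (\<alpha> (i - j)) ^ p ^ j * fst (\<beta> j))"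
  by (simp add: gmult_def)

lemma gm_snd:
  assumes "of_nat p = (0::'a::ring_1)" "\<And>k. cntr (fst (\<alpha> k))"
  shows "snd (gmult p (\<alpha>::'a pseries) \<beta> i) = (\<Sum>j\<le>i. fst (\<alpha> (i - j)) ^ p ^ j * snd (\<beta> j)) + snd (\<alpha> i) * fst (\<beta> 0)"
proof -
  have "snd (gmult p \<alpha> \<beta> i) = (\<Sum>j\<le>i. fst (\<alpha> (i - j)) ^ p ^ j * snd (\<beta> j)) + (\<Sum>j\<le>i. snd (dpow (\<alpha> (i - j)) (p ^ j)) * fst (\<beta> j))"
    by (simp add: gmult_def sum.distrib)
  also have "(\<Sum>j\<le>i. snd (dpow (\<alpha> (i - j)) (p ^ j)) * fst (\<beta> j)) = snd (\<alpha> i) * fst (\<beta> 0) + (\<Sum>k<i. snd (dpow (\<alpha> (i - Suc k)) (p ^ Suc k)) * fst (\<beta> (Suc k)))"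
    by (subst sum.atMost_shift) simp
  also have "(\<Sum>k<i. snd (dpow (\<alpha> (i - Suc k)) (p ^ Suc k)) * fst (\<beta> (Suc k))) = 0"
    using snd_dpow_p[OF assms(2) assms(1), of "Suc _"] by (intro sum.neutral ballI) (simp del: power_Suc)
  finally show ?thesis by simp
qed

lemma cntr_gm_fst:
  assumes "\<And>k. cntr (fst (\<alpha> k))" "\<And>k. cntr (fst (\<beta> k))"
  shows "cntr (fst (gmult p \<alpha> \<beta> i))"
  unfolding gm_fst using assms by (intro cntr_sum cntr_mult cntr_power) auto

lemma sum_tri_swap:
  fixes g :: "nat \<Rightarrow> nat \<Rightarrow> 'b::comm_monoid_add"
  shows "(\<Sum>m\<le>i. \<Sum>j\<le>m. g m j) = (\<Sum>j\<le>i. \<Sum>l\<le>i - j. g (l + j) j)"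
proof (induction i)
  case (Suc i)
  have "(\<Sum>j\<le>Suc i. \<Sum>l\<le>Suc i - j. g (l + j) j) = (\<Sum>j\<le>i. \<Sum>l\<le>Suc i - j. g (l + j) j) + g (Suc i) (Suc i)"
    by simp
  also have "(\<Sum>j\<le>i. \<Sum>l\<le>Suc i - j. g (l + j) j) = (\<Sum>j\<le>i. (\<Sum>l\<le>i - j. g (l + j) j) + g (Suc i) j)"
    by (intro sum.cong refl) (simp add: Suc_diff_le)
  finally show ?case using Suc by (simp add: sum.distrib add_ac)
qed simp

lemma assoc_core:
  fixes A B C :: "nat \<Rightarrow> 'a::ring_1"
  assumes "prime p" "of_nat p = (0::'a)" "\<And>k. cntr (A k)" "\<And>k. cntr (B k)"
  shows "(\<Sum>j\<le>i. (\<Sum>l\<le>i - j. A (i - j - l) ^ p ^ l * B l) ^ p ^ j * C j)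
       = (\<Sum>m\<le>i. A (i - m) ^ p ^ m * (\<Sum>j\<le>m. B (m - j) ^ p ^ j * C j))"
proof -
  have "(\<Sum>j\<le>i. (\<Sum>l\<le>i - j. A (i - j - l) ^ p ^ l * B l) ^ p ^ j * C j)
      = (\<Sum>j\<le>i. \<Sum>l\<le>i - j. A (i - (l + j)) ^ p ^ (l + j) * (B l ^ p ^ j * C j))"
  proof (intro sum.cong refl)
    fix j assume j: "j \<in> {..i}"
    have "(\<Sum>l\<le>i - j. A (i - j - l) ^ p ^ l * B l) ^ p ^ j = (\<Sum>l\<le>i - j. (A (i - j - l) ^ p ^ l * B l) ^ p ^ j)"
      using assms by (intro frob_sum) (auto intro: cntr_mult cntr_power)
    also have "... = (\<Sum>l\<le>i - j. A (i - (l + j)) ^ p ^ (l + j) * B l ^ p ^ j)"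
      using assms(3) by (intro sum.cong refl) (simp add: cntr_power_mult cntr_power add.commute flip: power_mult power_add)
    finally show "(\<Sum>l\<le>i - j. A (i - j - l) ^ p ^ l * B l) ^ p ^ j * C j = (\<Sum>l\<le>i - j. A (i - (l + j)) ^ p ^ (l + j) * (B l ^ p ^ j * C j))"
      by (simp add: sum_distrib_right mult.assoc)
  qed
  also have "... = (\<Sum>m\<le>i. \<Sum>j\<le>m. A (i - m) ^ p ^ m * (B (m - j) ^ p ^ j * C j))"
    by (subst sum_tri_swap) simp
  also have "... = (\<Sum>m\<le>i. A (i - m) ^ p ^ m * (\<Sum>j\<le>m. B (m - j) ^ p ^ j * C j))"
    by (simp add: sum_distrib_left)
  finally show ?thesis .
qed


definition okc :: "'a::ring_1 pseries \<Rightarrow> bool" where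
  "okc \<alpha> \<longleftrightarrow> (\<forall>k. cntr (fst (\<alpha> k)))"

lemma okcD: "okc \<alpha> \<Longrightarrow> cntr (fst (\<alpha> k))"
  by (simp add: okc_def)

lemma okc_gmult: "okc \<alpha> \<Longrightarrow> okc \<beta> \<Longrightarrow> okc (gmult p \<alpha> \<beta>)"
  unfolding okc_def using cntr_gm_fst by blast

lemma gm_fst0: "fst (gmult p \<alpha> \<beta> 0) = fst (\<alpha> 0) * fst (\<beta> 0)"
  by (simp add: gm_fst)

lemma ring_aux: "(c::'a::ring) + (s + a * b) * g = c + s * g + a * (b * g)"
  by (simp add: algebra_simps)

lemma gmult_assoc:
  assumes "prime p" "of_nat p = (0::'a::ring_1)" "okc \<alpha>" "okc (\<beta>::'a pseries)"
  shows "gmult p (gmult p \<alpha> \<beta>) \<gamma> = gmult p \<alpha> (gmult p \<beta> \<gamma>)"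
proof (rule ext, rule prod_eqI)
  fix i
  have cA: "\<And>k. cntr (fst (\<alpha> k))" and cB: "\<And>k. cntr (fst (\<beta> k))"
    using assms(3,4) by (auto simp: okc_def)
  have cAB: "\<And>k. cntr (fst (gmult p \<alpha> \<beta> k))" using cntr_gm_fst cA cB by blast
  show "fst (gmult p (gmult p \<alpha> \<beta>) \<gamma> i) = fst (gmult p \<alpha> (gmult p \<beta> \<gamma>) i)"
    unfolding gm_fst using assoc_core[OF assms(1,2) cA cB] by simp
  have core: "(\<Sum>j\<le>i. fst (gmult p \<alpha> \<beta> (i - j)) ^ p ^ j * snd (\<gamma> j))
      = (\<Sum>m\<le>i. fst (\<alpha> (i - m)) ^ p ^ m * (\<Sum>j\<le>m. fst (\<beta> (m - j)) ^ p ^ j * snd (\<gamma> j)))"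
    unfolding gm_fst using assoc_core[OF assms(1,2) cA cB] by simp
  show "snd (gmult p (gmult p \<alpha> \<beta>) \<gamma> i) = snd (gmult p \<alpha> (gmult p \<beta> \<gamma>) i)"
  proof -
    let ?S1 = "\<Sum>m\<le>i. fst (\<alpha> (i - m)) ^ p ^ m * snd (\<beta> m)"
    let ?C = "\<Sum>m\<le>i. fst (\<alpha> (i - m)) ^ p ^ m * (\<Sum>j\<le>m. fst (\<beta> (m - j)) ^ p ^ j * snd (\<gamma> j))"
    have L: "snd (gmult p (gmult p \<alpha> \<beta>) \<gamma> i) = ?C + (?S1 + snd (\<alpha> i) * fst (\<beta> 0)) * fst (\<gamma> 0)"
      unfolding gm_snd[OF assms(2) cAB] gm_snd[OF assms(2) cA] core by (rule refl)
    have "snd (gmult p \<alpha> (gmult p \<beta> \<gamma>) i) = (\<Sum>m\<le>i. fst (\<alpha> (i - m)) ^ p ^ m * snd (gmult p \<beta> \<gamma> m)) + snd (\<alpha> i) * fst (gmult p \<beta> \<gamma> 0)"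
      by (rule gm_snd[OF assms(2) cA])
    also have "(\<Sum>m\<le>i. fst (\<alpha> (i - m)) ^ p ^ m * snd (gmult p \<beta> \<gamma> m)) = (\<Sum>m\<le>i. fst (\<alpha> (i - m)) ^ p ^ m * ((\<Sum>j\<le>m. fst (\<beta> (m - j)) ^ p ^ j * snd (\<gamma> j)) + snd (\<beta> m) * fst (\<gamma> 0)))"
      by (intro sum.cong refl) (simp only: gm_snd[OF assms(2) cB])
    also have "... = ?C + ?S1 * fst (\<gamma> 0)"
      unfolding distrib_left sum.distrib sum_distrib_right by (simp only: mult.assoc)
    also have "fst (gmult p \<beta> \<gamma> 0) = fst (\<beta> 0) * fst (\<gamma> 0)" by (rule gm_fst0)
    finally show ?thesis unfolding L by (simp only: ring_aux)
  qed
qed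


context
  fixes p :: nat and Ahom :: "int \<Rightarrow> 'a::ring_1 set"
  assumes gca: "graded_comm_algebra p Ahom"
begin

lemmas gcad = gca[unfolded graded_comm_algebra_def]
lemma gca_char: "of_nat p = (0::'a)" using gcad[THEN conjunct1] .
lemma gca_zero: "0 \<in> Ahom d" using gcad[THEN conjunct2, THEN conjunct1] by blast
lemma gca_add: "x \<in> Ahom d \<Longrightarrow> y \<in> Ahom d \<Longrightarrow> x + y \<in> Ahom d"
  using gcad[THEN conjunct2, THEN conjunct1] by blast
lemma gca_one: "1 \<in> Ahom 0" using gcad[THEN conjunct2, THEN conjunct2, THEN conjunct1] .
lemma gca_mult: "x \<in> Ahom d \<Longrightarrow> y \<in> Ahom e \<Longrightarrow> x * y \<in> Ahom (d + e)"
  using gcad[THEN conjunct2, THEN conjunct2, THEN conjunct2, THEN conjunct1] by blast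
lemma gca_comm: "x \<in> Ahom d \<Longrightarrow> y \<in> Ahom e \<Longrightarrow> x * y = (-1) ^ nat \<bar>d * e\<bar> * (y * x)"
  using gcad[THEN conjunct2, THEN conjunct2, THEN conjunct2, THEN conjunct2, THEN conjunct1] by blast
lemma gca_decomp: "\<exists>c. finite {d. c d \<noteq> 0} \<and> (\<forall>d. c d \<in> Ahom d) \<and> x = sum c {d. c d \<noteq> 0}"
  using gcad[THEN conjunct2, THEN conjunct2, THEN conjunct2, THEN conjunct2, THEN conjunct2, rule_format, of x]
  by (rule ex1_implies_ex)

lemma gca_sum: "(\<And>j. j \<in> A \<Longrightarrow> f j \<in> Ahom d) \<Longrightarrow> sum f A \<in> Ahom d"
  by (induction A rule: infinite_finite_induct) (auto simp: gca_zero gca_add)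

lemma gca_power: "x \<in> Ahom d \<Longrightarrow> x ^ m \<in> Ahom (int m * d)"
proof (induction m)
  case 0 then show ?case by (simp add: gca_one)
next
  case (Suc m)
  have "x * x ^ m \<in> Ahom (d + int m * d)" using Suc by (intro gca_mult) auto
  then show ?case by (simp add: algebra_simps)
qed

lemma gca_cntr:
  assumes "x \<in> Ahom d" "p = 2 \<or> even d"
  shows "cntr x"
  unfolding cntr_def
proof
  fix y
  obtain c where c: "finite {d. c d \<noteq> 0}" "\<forall>d. c d \<in> Ahom d" "y = sum c {d. c d \<noteq> 0}"
    using gca_decomp by blast
  have "x * c e = c e * x" for e
  proof -
    have sg: "(-1::'a) ^ nat \<bar>d * e\<bar> = 1"
    proof (cases "p = 2")
      case True
      have "(1::'a) + 1 = 0" using gca_char True by (metis of_nat_numeral one_add_one)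
      then have "(-1::'a) = 1" by (metis add_eq_0_iff)
      then show ?thesis by simp
    next
      case False
      then have "even d" using assms(2) by blast
      then have "even (d * e)" by simp
      then have "even (nat \<bar>d * e\<bar>)" by (simp add: even_nat_iff)
      then show ?thesis by (rule neg_one_even_power)
    qed
    show ?thesis using gca_comm[OF assms(1) c(2)[rule_format, of e]] sg by simp
  qed
  then show "x * y = y * x" unfolding c(3) sum_distrib_left sum_distrib_right by (rule sum.cong[OF refl])
qed

end


lemma cd_add:
  assumes "j \<le> i"
  shows "int (p ^ j) * coeff_deg p (i - j) + coeff_deg p j = coeff_deg p i"
proof -
  have e: "q ^ i = q ^ j * q ^ (i - j)" for q :: nat using assms by (simp flip: power_add)
  show ?thesis
  proof (cases "p = 2")
    case True
    then show ?thesis unfolding coeff_deg_def using e[of 2] by (simp add: algebra_simps)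
  next
    case False
    then show ?thesis unfolding coeff_deg_def using e[of p] by (simp add: algebra_simps)
  qed
qed

lemma cd_0[simp]: "coeff_deg p 0 = 0" by (simp add: coeff_deg_def)

lemma XserF: "fst (Xser k) = (if k = 0 then 1 else 0)" and XserS[simp]: "snd (Xser k) = 0"
  by (simp_all add: Xser_def)

lemma okc_X: "okc Xser" by (simp add: okc_def XserF)

lemma gmult_X_left:
  assumes "prime p" "of_nat p = (0::'a::ring_1)"
  shows "gmult p Xser \<alpha> = (\<alpha>::'a pseries)"
proof (rule ext, rule prod_eqI)
  fix i
  have pp: "0 < p" using assms(1) prime_gt_0_nat by simp
  have "fst (gmult p Xser \<alpha> i) = (\<Sum>j\<le>i. (if j = i then fst (\<alpha> j) else 0))"
    unfolding gm_fst XserF by (intro sum.cong refl) (auto simp: zero_power pp)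
  then show "fst (gmult p Xser \<alpha> i) = fst (\<alpha> i)" by simp
  have "snd (gmult p Xser \<alpha> i) = (\<Sum>j\<le>i. (if j = i then snd (\<alpha> j) else 0))"
    unfolding gm_snd[OF assms(2) okc_X[unfolded okc_def, rule_format]] XserF
    by (simp only: XserS mult_zero_left add_0_right, intro sum.cong refl) (auto simp: zero_power pp)
  then show "snd (gmult p Xser \<alpha> i) = snd (\<alpha> i)" by simp
qed

lemma gmult_X_right:
  assumes "prime p" "of_nat p = (0::'a::ring_1)" "okc \<alpha>"
  shows "gmult p \<alpha> Xser = (\<alpha>::'a pseries)"
proof (rule ext, rule prod_eqI)
  fix i
  have "fst (gmult p \<alpha> Xser i) = (\<Sum>j\<le>i. (if j = 0 then fst (\<alpha> i) else 0))"
    unfolding gm_fst XserF by (intro sum.cong refl) auto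
  then show "fst (gmult p \<alpha> Xser i) = fst (\<alpha> i)" by simp
  have "snd (gmult p \<alpha> Xser i) = snd (\<alpha> i)"
    unfolding gm_snd[OF assms(2) assms(3)[unfolded okc_def, rule_format]] XserF by simp
  then show "snd (gmult p \<alpha> Xser i) = snd (\<alpha> i)" .
qed

context
  fixes p :: nat and Ahom :: "int \<Rightarrow> 'a::ring_1 set"
  assumes gca: "graded_comm_algebra p Ahom" and pr: "prime p"
begin

lemma Gp_fst0: "\<alpha> \<in> Gp p Ahom \<Longrightarrow> fst (\<alpha> 0) = 1"
  by (simp add: Gp_def)
lemma Gp_fst: "\<alpha> \<in> Gp p Ahom \<Longrightarrow> fst (\<alpha> i) \<in> Ahom (coeff_deg p i)"
  by (simp add: Gp_def)
lemma Gp_snd2: "\<alpha> \<in> Gp p Ahom \<Longrightarrow> p = 2 \<Longrightarrow> snd (\<alpha> i) = 0"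
  by (simp add: Gp_def)
lemma Gp_snd: "\<alpha> \<in> Gp p Ahom \<Longrightarrow> p \<noteq> 2 \<Longrightarrow> snd (\<alpha> i) \<in> Ahom (coeff_deg p i + 1)"
  by (simp add: Gp_def)

lemma Gp_okc: "\<alpha> \<in> Gp p Ahom \<Longrightarrow> okc \<alpha>"
  unfolding okc_def
proof
  fix k assume a: "\<alpha> \<in> Gp p Ahom"
  have "p = 2 \<or> even (coeff_deg p k)" by (auto simp: coeff_deg_def)
  then show "cntr (fst (\<alpha> k))" using gca_cntr[OF gca Gp_fst[OF a]] by blast
qed

lemma Gp_mult:
  assumes a: "\<alpha> \<in> Gp p Ahom" and b: "\<beta> \<in> Gp p Ahom"
  shows "gmult p \<alpha> \<beta> \<in> Gp p Ahom"
proof -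
  have ch: "of_nat p = (0::'a)" by (rule gca_char[OF gca])
  have cA: "\<And>k. cntr (fst (\<alpha> k))" using Gp_okc[OF a] by (simp add: okc_def)
  have f0: "fst (gmult p \<alpha> \<beta> 0) = 1" using Gp_fst0[OF a] Gp_fst0[OF b] by (simp add: gm_fst0)
  have trm: "fst (\<alpha> (i - j)) ^ p ^ j * z \<in> Ahom (coeff_deg p i + e)"
    if "j \<le> i" "z \<in> Ahom (coeff_deg p j + e)" for i j z e
  proof -
    have "fst (\<alpha> (i - j)) ^ p ^ j * z \<in> Ahom (int (p ^ j) * coeff_deg p (i - j) + (coeff_deg p j + e))"
      by (intro gca_mult[OF gca] gca_power[OF gca] Gp_fst[OF a] that(2))
    also have "int (p ^ j) * coeff_deg p (i - j) + (coeff_deg p j + e) = coeff_deg p i + e"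
      using cd_add[OF that(1), of p] by simp
    finally show ?thesis .
  qed
  have fi: "fst (gmult p \<alpha> \<beta> i) \<in> Ahom (coeff_deg p i)" for i
    unfolding gm_fst using trm[where e=0] Gp_fst[OF b] by (intro gca_sum[OF gca]) simp
  show ?thesis
  proof (cases "p = 2")
    case True
    have "snd (gmult p \<alpha> \<beta> i) = 0" for i
      unfolding gm_snd[OF ch cA] using Gp_snd2[OF a True] Gp_snd2[OF b True] by simp
    then show ?thesis using f0 fi True by (simp add: Gp_def)
  next
    case False
    have "snd (gmult p \<alpha> \<beta> i) \<in> Ahom (coeff_deg p i + 1)" for i
      unfolding gm_snd[OF ch cA]
    proof (intro gca_add[OF gca] gca_sum[OF gca])
      show "snd (\<alpha> i) * fst (\<beta> 0) \<in> Ahom (coeff_deg p i + 1)"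
        using gca_mult[OF gca Gp_snd[OF a False] Gp_fst[OF b], of i 0] by simp
      fix j assume "j \<in> {..i}"
      then show "fst (\<alpha> (i - j)) ^ p ^ j * snd (\<beta> j) \<in> Ahom (coeff_deg p i + 1)"
        using trm[where e=1] Gp_snd[OF b False] by simp
    qed
    then show ?thesis using f0 fi False by (simp add: Gp_def)
  qed
qed

lemma X_Gp: "Xser \<in> Gp p Ahom"
  by (auto simp: Gp_def XserF gca_one[OF gca] gca_zero[OF gca])

lemma Gp_ev_mult:
  assumes a: "\<alpha> \<in> Gp_ev p Ahom" and b: "\<beta> \<in> Gp_ev p Ahom"
  shows "gmult p \<alpha> \<beta> \<in> Gp_ev p Ahom"
proof -
  have ch: "of_nat p = (0::'a)" by (rule gca_char[OF gca])
  have aa: "\<alpha> \<in> Gp p Ahom" "\<forall>i. snd (\<alpha> i) = 0" and bb: "\<beta> \<in> Gp p Ahom" "\<forall>i. snd (\<beta> i) = 0"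
    using a b by (auto simp: Gp_ev_def)
  have cA: "\<And>k. cntr (fst (\<alpha> k))" using Gp_okc[OF aa(1)] by (simp add: okc_def)
  have "snd (gmult p \<alpha> \<beta> i) = 0" for i
    unfolding gm_snd[OF ch cA] using aa(2) bb(2) by simp
  then show ?thesis using Gp_mult[OF aa(1) bb(1)] by (simp add: Gp_ev_def)
qed

lemma X_Gp_ev: "Xser \<in> Gp_ev p Ahom"
  by (simp add: Gp_ev_def X_Gp)

end


lemma grp_simps[simp]: "carrier (grp p S) = S" "monoid.mult (grp p S) = gmult p" "one (grp p S) = Xser"
  by (simp_all add: grp_def)

lemma nil_iff:
  assumes "cntr (fst x)" "of_nat p = (0::'a::ring_1)" "0 < e"
  shows "dpow (x::'a \<times> 'a) (p ^ e) = (0, 0) \<longleftrightarrow> fst x ^ p ^ e = 0"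
  using snd_dpow_p[OF assms] by (simp add: prod_eq_iff)

lemma pow_zero_mono: "(x::'a::ring_1) ^ a = 0 \<Longrightarrow> a \<le> b \<Longrightarrow> x ^ b = 0"
  by (metis le_add_diff_inverse mult_zero_left power_add)

context
  fixes p :: nat and Ahom :: "int \<Rightarrow> 'a::ring_1 set" and n :: nat
  assumes gca: "graded_comm_algebra p Ahom" and pr: "prime p"
begin

lemma ch: "of_nat p = (0::'a)" by (rule gca_char[OF gca])
lemma p_pos: "0 < p" using pr prime_gt_0_nat by blast

lemma Gpn_Gp: "\<alpha> \<in> Gpn p Ahom n \<Longrightarrow> \<alpha> \<in> Gp p Ahom" by (simp add: Gpn_def)
lemma Gpn_trunc: "\<alpha> \<in> Gpn p Ahom n \<Longrightarrow> n + 1 \<le> i \<Longrightarrow> \<alpha> i = (0, 0)" by (simp add: Gpn_def)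
lemma Gpn_nil: "\<alpha> \<in> Gpn p Ahom n \<Longrightarrow> 1 \<le> i \<Longrightarrow> i \<le> n \<Longrightarrow> fst (\<alpha> i) ^ p ^ (n - i + 1) = 0"
proof -
  assume a: "\<alpha> \<in> Gpn p Ahom n" and i: "1 \<le> i" "i \<le> n"
  have "dpow (\<alpha> i) (p ^ (n - i + 1)) = (0, 0)" using a i unfolding Gpn_def by blast
  moreover have c: "cntr (fst (\<alpha> i))" using okcD[OF Gp_okc[OF gca pr Gpn_Gp[OF a]]] by blast
  ultimately show ?thesis using nil_iff[OF c ch, of "n - i + 1"] by simp
qed

lemma Gpn_zp:
  assumes a: "\<alpha> \<in> Gpn p Ahom n" and "1 \<le> k" "n + 1 \<le> k + m"
  shows "fst (\<alpha> k) ^ p ^ m = 0"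
proof (cases "k \<le> n")
  case True
  have "p ^ (n - k + 1) \<le> p ^ m" using assms p_pos True by (intro power_increasing) auto
  then show ?thesis using pow_zero_mono[OF Gpn_nil[OF a assms(2) True]] by blast
next
  case False
  then show ?thesis using Gpn_trunc[OF a, of k] p_pos by (simp add: zero_power)
qed

lemma Gpn_mult:
  assumes a: "\<alpha> \<in> Gpn p Ahom n" and b: "\<beta> \<in> Gpn p Ahom n"
  shows "gmult p \<alpha> \<beta> \<in> Gpn p Ahom n"
proof -
  have aG: "\<alpha> \<in> Gp p Ahom" and bG: "\<beta> \<in> Gp p Ahom" using a b by (simp_all add: Gpn_def)
  have cA: "\<And>k. cntr (fst (\<alpha> k))" and cB: "\<And>k. cntr (fst (\<beta> k))"
    using Gp_okc[OF gca pr aG] Gp_okc[OF gca pr bG] by (simp_all add: okc_def)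
  have cAB: "cntr (fst (gmult p \<alpha> \<beta> i))" for i using cntr_gm_fst cA cB by blast
  have z: "fst (\<alpha> (i - j)) ^ p ^ j * z = 0" if "n + 1 \<le> i" "j \<le> n" for i j z
    using Gpn_zp[OF a, of "i - j" j] that by simp
  have zb: "fst (\<alpha> (i - j)) ^ p ^ j * fst (\<beta> j) = 0" "fst (\<alpha> (i - j)) ^ p ^ j * snd (\<beta> j) = 0"
    if "n + 1 \<le> i" for i j
  proof -
    show "fst (\<alpha> (i - j)) ^ p ^ j * fst (\<beta> j) = 0"
      using z[OF that] Gpn_trunc[OF b, of j] by (cases "j \<le> n") auto
    show "fst (\<alpha> (i - j)) ^ p ^ j * snd (\<beta> j) = 0"
      using z[OF that] Gpn_trunc[OF b, of j] by (cases "j \<le> n") auto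
  qed
  have tr: "gmult p \<alpha> \<beta> i = (0, 0)" if "n + 1 \<le> i" for i
  proof (rule prod_eqI)
    show "fst (gmult p \<alpha> \<beta> i) = fst (0, 0)" unfolding gm_fst using zb(1)[OF that] by simp
    show "snd (gmult p \<alpha> \<beta> i) = snd (0, 0)" unfolding gm_snd[OF ch cA]
      using zb(2)[OF that] Gpn_trunc[OF a that] by simp
  qed
  have nl: "dpow (gmult p \<alpha> \<beta> i) (p ^ (n - i + 1)) = (0, 0)" if "1 \<le> i" "i \<le> n" for i
  proof -
    let ?e = "n - i + 1"
    have "fst (gmult p \<alpha> \<beta> i) ^ p ^ ?e = (\<Sum>j\<le>i. (fst (\<alpha> (i - j)) ^ p ^ j * fst (\<beta> j)) ^ p ^ ?e)"
      unfolding gm_fst using cA cB by (intro frob_sum[OF pr ch]) (auto intro: cntr_mult cntr_power)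
    also have "... = (\<Sum>j\<le>i. fst (\<alpha> (i - j)) ^ p ^ (j + ?e) * fst (\<beta> j) ^ p ^ ?e)"
      using cA by (intro sum.cong refl) (simp only: cntr_power_mult[OF cntr_power[OF cA]] power_mult[symmetric] power_add[symmetric])
    also have "... = 0"
    proof (intro sum.neutral ballI)
      fix j assume j: "j \<in> {..i}"
      show "fst (\<alpha> (i - j)) ^ p ^ (j + ?e) * fst (\<beta> j) ^ p ^ ?e = 0"
      proof (cases "j = i")
        case True
        then show ?thesis using Gpn_zp[OF b, of i ?e] that by simp
      next
        case False
        then show ?thesis using Gpn_zp[OF a, of "i - j" "j + ?e"] that j by simp
      qed
    qed
    finally show ?thesis using nil_iff[OF cAB ch, of "n - i + 1"] by simp
  qed
  show ?thesis using Gp_mult[OF gca pr aG bG] tr nl by (simp add: Gpn_def)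
qed

lemma X_Gpn: "Xser \<in> Gpn p Ahom n"
proof -
  have "dpow ((Xser::'a pseries) i) (p ^ (n - i + 1)) = (0, 0)" if "1 \<le> i" for i :: nat
  proof -
    have c: "cntr (fst ((Xser::'a pseries) i))" by (simp add: XserF)
    show ?thesis using nil_iff[OF c ch, of "n - i + 1"] that p_pos by (simp add: XserF zero_power)
  qed
  then show ?thesis using X_Gp[OF gca pr] by (simp add: Gpn_def Xser_def)
qed

lemma Gpn_ev_mult: "\<alpha> \<in> Gpn_ev p Ahom n \<Longrightarrow> \<beta> \<in> Gpn_ev p Ahom n \<Longrightarrow> gmult p \<alpha> \<beta> \<in> Gpn_ev p Ahom n"
  using Gpn_mult Gp_ev_mult[OF gca pr] by (simp add: Gpn_ev_def)

lemma X_Gpn_ev: "Xser \<in> Gpn_ev p Ahom n"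
  using X_Gpn X_Gp_ev[OF gca pr] by (simp add: Gpn_ev_def)

lemma Gpn_ev_sub: "Gpn_ev p Ahom n \<subseteq> Gpn p Ahom n" by (auto simp: Gpn_ev_def)

lemma monoid_gen:
  assumes "S \<subseteq> Gpn p Ahom n" "Xser \<in> S" "\<And>x y. x \<in> S \<Longrightarrow> y \<in> S \<Longrightarrow> gmult p x y \<in> S"
  shows "monoid (grp p S)"
proof (rule monoidI, simp_all)
  show "\<And>x y. x \<in> S \<Longrightarrow> y \<in> S \<Longrightarrow> gmult p x y \<in> S" by (rule assms(3))
  show "Xser \<in> S" by (rule assms(2))
  have ok: "x \<in> S \<Longrightarrow> okc x" for x using assms(1) Gpn_Gp Gp_okc[OF gca pr] by blast
  show "\<And>x y z. x \<in> S \<Longrightarrow> y \<in> S \<Longrightarrow> z \<in> S \<Longrightarrow> gmult p (gmult p x y) z = gmult p x (gmult p y z)"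
    using gmult_assoc[OF pr ch] ok by blast
  show "\<And>x. x \<in> S \<Longrightarrow> gmult p Xser x = x" using gmult_X_left[OF pr ch] by blast
  show "\<And>x. x \<in> S \<Longrightarrow> gmult p x Xser = x" using gmult_X_right[OF pr ch] ok by blast
qed

end


definition Lv :: "nat \<Rightarrow> 'a::ring_1 pseries \<Rightarrow> bool" where
  "Lv k w \<longleftrightarrow> (\<forall>i. 1 \<le> i \<and> i \<le> k \<longrightarrow> fst (w i) = 0) \<and> (\<forall>i. i < k \<longrightarrow> snd (w i) = 0)"

definition agr :: "nat \<Rightarrow> 'a::ring_1 pseries \<Rightarrow> 'a pseries \<Rightarrow> bool" where
  "agr m u v \<longleftrightarrow> (\<forall>i\<le>m. fst (u i) = fst (v i)) \<and> (\<forall>i<m. snd (u i) = snd (v i))"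

lemma Lv_0[simp]: "Lv 0 w" by (simp add: Lv_def)

lemma Lv_X: "Lv k Xser" by (simp add: Lv_def XserF)

lemma agr_Lv: "agr m u v \<Longrightarrow> Lv m v \<Longrightarrow> Lv m u"
  by (simp add: agr_def Lv_def)

lemma Lv_X_agr: "Lv m h \<Longrightarrow> fst (h 0) = 1 \<Longrightarrow> agr m Xser h"
  by (auto simp: agr_def Lv_def XserF)

lemma fst_lv:
  assumes "1 \<le> i" "0 < p" "fst (c 0) = 1" "fst (v 0) = 1" "\<And>l. 1 \<le> l \<Longrightarrow> l < i \<Longrightarrow> fst (c l) = 0"
  shows "fst (gmult p c v i) = fst (c i) + fst (v i)"
  unfolding gm_fst using assms by (subst sum_two) (auto simp: zero_power)

lemma fst_rv:
  assumes "1 \<le> i" "0 < p" "fst (c 0) = 1" "fst (v 0) = 1" "\<And>l. 1 \<le> l \<Longrightarrow> l < i \<Longrightarrow> fst (v l) = 0"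
  shows "fst (gmult p c v i) = fst (c i) + fst (v i)"
  unfolding gm_fst using assms by (subst sum_two) (auto simp: zero_power)

lemma snd_lv:
  assumes "1 \<le> i" "0 < p" "of_nat p = (0::'a::ring_1)" "okc c" "fst (c 0) = 1" "fst (v 0) = 1"
    "\<And>l. 1 \<le> l \<Longrightarrow> l < i \<Longrightarrow> fst (c l) = 0"
  shows "snd (gmult p c (v::'a pseries) i) = fst (c i) * snd (v 0) + snd (v i) + snd (c i)"
  unfolding gm_snd[OF assms(3) okcD[OF assms(4)]] using assms by (subst sum_two) (auto simp: zero_power)

lemma snd_rv:
  assumes "1 \<le> i" "0 < p" "of_nat p = (0::'a::ring_1)" "okc c" "fst (c 0) = 1" "fst (v 0) = 1"
    "\<And>l. 1 \<le> l \<Longrightarrow> l < i \<Longrightarrow> snd (v l) = 0"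
  shows "snd (gmult p c (v::'a pseries) i) = fst (c i) * snd (v 0) + snd (v i) + snd (c i)"
  unfolding gm_snd[OF assms(3) okcD[OF assms(4)]] using assms by (subst sum_two) (auto simp: zero_power)

lemma snd_0:
  assumes "of_nat p = (0::'a::ring_1)" "okc c" "fst (c 0) = 1" "fst (v 0) = 1"
  shows "snd (gmult p c (v::'a pseries) 0) = snd (v 0) + snd (c 0)"
  unfolding gm_snd[OF assms(1) okcD[OF assms(2)]] using assms by simp

lemma fst_0:
  assumes "fst (c 0) = 1" "fst (v 0) = 1"
  shows "fst (gmult p c v 0) = 1"
  using assms by (simp add: gm_fst0)

lemma conv_lemma:
  assumes "0 < p" "of_nat p = (0::'a::ring_1)" "okc c" "fst (c 0) = 1" "fst (v 0) = 1"
    and ag: "agr m (gmult p c v) (v::'a pseries)"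
  shows "Lv m c"
proof -
  have main: "i \<le> m \<longrightarrow> (1 \<le> i \<longrightarrow> fst (c i) = 0) \<and> (i < m \<longrightarrow> snd (c i) = 0)" for i
  proof (induction i rule: less_induct)
    case (less i)
    show ?case
    proof (cases "i = 0")
      case True
      have "0 < m \<Longrightarrow> snd (c 0) = 0"
        using ag snd_0[where c=c and v=v and p=p, OF assms(2-5)] by (auto simp: agr_def)
      then show ?thesis using True by auto
    next
      case False
      show ?thesis
      proof
        assume im: "i \<le> m"
        have mid: "\<And>l. 1 \<le> l \<Longrightarrow> l < i \<Longrightarrow> fst (c l) = 0" using less im by auto
        have f: "fst (c i) = 0"
          using fst_lv[where c=c and v=v and p=p, OF _ assms(1,4,5) mid] False ag im by (auto simp: agr_def)
        have "i < m \<Longrightarrow> snd (c i) = 0"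
          using snd_lv[where c=c and v=v and p=p, OF _ assms(1,2,3,4,5) mid] False ag f by (auto simp: agr_def)
        then show "(1 \<le> i \<longrightarrow> fst (c i) = 0) \<and> (i < m \<longrightarrow> snd (c i) = 0)" using f by simp
      qed
    qed
  qed
  then show ?thesis unfolding Lv_def by auto
qed

lemma fwd_lemma:
  assumes "0 < p" "of_nat p = (0::'a::ring_1)" "okc c" "fst (c 0) = 1" "fst (v 0) = 1"
    and L: "Lv m c"
  shows "agr m (gmult p c v) (v::'a pseries)"
  unfolding agr_def
proof (intro conjI allI impI)
  fix i assume im: "i \<le> m"
  have mid: "\<And>l. 1 \<le> l \<Longrightarrow> l < i \<Longrightarrow> fst (c l) = 0" using L im by (auto simp: Lv_def)
  show "fst (gmult p c v i) = fst (v i)"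
  proof (cases "i = 0")
    case True then show ?thesis using fst_0[where c=c and v=v and p=p, OF assms(4,5)] assms(5) by simp
  next
    case False then show ?thesis using fst_lv[where c=c and v=v and p=p, OF _ assms(1,4,5) mid] L im by (auto simp: Lv_def)
  qed
next
  fix i assume im: "i < m"
  have mid: "\<And>l. 1 \<le> l \<Longrightarrow> l < i \<Longrightarrow> fst (c l) = 0" using L im by (auto simp: Lv_def)
  show "snd (gmult p c v i) = snd (v i)"
  proof (cases "i = 0")
    case True then show ?thesis using snd_0[where c=c and v=v and p=p, OF assms(2-5)] L im by (auto simp: Lv_def)
  next
    case False then show ?thesis using snd_lv[where c=c and v=v and p=p, OF _ assms(1-5) mid] L im by (auto simp: Lv_def)
  qed
qed

lemma comm_lemma:
  assumes "0 < p" "of_nat p = (0::'a::ring_1)" "okc x" "okc y" "fst (x 0) = 1" "fst (y 0) = 1"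
    and L: "Lv k x"
  shows "agr (Suc k) (gmult p x y) (gmult p y (x::'a pseries))"
  unfolding agr_def
proof (intro conjI allI impI)
  fix i assume im: "i \<le> Suc k"
  show "fst (gmult p x y i) = fst (gmult p y x i)"
  proof (cases "i = 0")
    case True then show ?thesis using fst_0[where c=x and v=y and p=p, OF assms(5,6)] fst_0[where c=y and v=x and p=p, OF assms(6,5)] by simp
  next
    case False
    have mid: "\<And>l. 1 \<le> l \<Longrightarrow> l < i \<Longrightarrow> fst (x l) = 0" using L im by (auto simp: Lv_def)
    show ?thesis using fst_lv[where c=x and v=y and p=p, OF _ assms(1,5,6) mid] fst_rv[where c=y and v=x and p=p, OF _ assms(1,6,5) mid] False
      by (simp add: add.commute)
  qed
next
  fix i assume im: "i < Suc k"
  show "snd (gmult p x y i) = snd (gmult p y x i)"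
  proof (cases "i = 0")
    case True then show ?thesis using snd_0[where c=x and v=y and p=p, OF assms(2,3,5,6)] snd_0[where c=y and v=x and p=p, OF assms(2,4,6,5)] by (simp add: add.commute)
  next
    case False
    have mid: "\<And>l. 1 \<le> l \<Longrightarrow> l < i \<Longrightarrow> fst (x l) = 0" using L im by (auto simp: Lv_def)
    have mid2: "\<And>l. 1 \<le> l \<Longrightarrow> l < i \<Longrightarrow> snd (x l) = 0" using L im by (auto simp: Lv_def)
    have "fst (x i) = 0" "snd (x 0) = 0" using L im False by (auto simp: Lv_def)
    then show ?thesis using snd_lv[where c=x and v=y and p=p, OF _ assms(1,2,3,5,6) mid] snd_rv[where c=y and v=x and p=p, OF _ assms(1,2,4,6,5) mid2] False
      by (simp add: add.commute)
  qed
qed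

lemma pow_step:
  assumes "0 < p" "of_nat p = (0::'a::ring_1)" "okc u" "fst (u 0) = 1" "fst (v 0) = 1"
    and Lu: "Lv k u" and Lw: "Lv k v"
  shows "Lv k (gmult p u v) \<and> fst (gmult p u v (Suc k)) = fst (u (Suc k)) + fst (v (Suc k))
     \<and> snd (gmult p u (v::'a pseries) k) = snd (u k) + snd (v k)"
proof (intro conjI)
  show "Lv k (gmult p u v)" using agr_Lv[OF fwd_lemma[where c=u and v=v and p=p, OF assms(1-5) Lu] Lw] .
  have mid: "\<And>l. 1 \<le> l \<Longrightarrow> l < Suc k \<Longrightarrow> fst (u l) = 0" using Lu by (auto simp: Lv_def)
  show "fst (gmult p u v (Suc k)) = fst (u (Suc k)) + fst (v (Suc k))"
    using fst_lv[where c=u and v=v and p=p, OF _ assms(1,4,5) mid] by simp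
  show "snd (gmult p u v k) = snd (u k) + snd (v k)"
  proof (cases "k = 0")
    case True then show ?thesis using snd_0[where c=u and v=v and p=p, OF assms(2-5)] by (simp add: add.commute)
  next
    case False
    have mid': "\<And>l. 1 \<le> l \<Longrightarrow> l < k \<Longrightarrow> fst (u l) = 0" using Lu by (auto simp: Lv_def)
    have "fst (u k) = 0" using Lu False by (auto simp: Lv_def)
    then show ?thesis using snd_lv[where c=u and v=v and p=p, OF _ assms(1-5) mid'] False by (simp add: add.commute)
  qed
qed


lemma comm_ident:
  fixes G (structure)
  assumes "group G" "x \<in> carrier G" "y \<in> carrier G"
  shows "x \<otimes>\<^bsub>G\<^esub> y \<otimes>\<^bsub>G\<^esub> inv\<^bsub>G\<^esub> x \<otimes>\<^bsub>G\<^esub> inv\<^bsub>G\<^esub> y \<otimes>\<^bsub>G\<^esub> (y \<otimes>\<^bsub>G\<^esub> x) = x \<otimes>\<^bsub>G\<^esub> y"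
proof -
  interpret group G by fact
  have 1: "inv y \<otimes> (y \<otimes> x) = x" using assms by (simp add: m_assoc[symmetric])
  have 2: "x \<otimes> y \<otimes> inv x \<otimes> x = x \<otimes> y" using assms by (simp add: m_assoc)
  have "x \<otimes> y \<otimes> inv x \<otimes> inv y \<otimes> (y \<otimes> x) = (x \<otimes> y \<otimes> inv x) \<otimes> (inv y \<otimes> (y \<otimes> x))"
    using assms by (simp add: m_assoc)
  also have "... = x \<otimes> y" using 1 2 by simp
  finally show ?thesis .
qed

context
  fixes p :: nat and Ahom :: "int \<Rightarrow> 'a::ring_1 set" and n :: nat
  assumes gca: "graded_comm_algebra p Ahom" and pr: "prime p"
begin

lemma S_props:
  assumes "S \<subseteq> Gpn p Ahom n" "w \<in> S"
  shows "okc w" "fst (w 0) = 1"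
proof -
  have "w \<in> Gp p Ahom" using assms Gpn_Gp[OF gca pr] by blast
  then show "okc w" "fst (w 0) = 1" using Gp_okc[OF gca pr] Gp_fst0[OF gca pr] by auto
qed

lemma pow_L:
  assumes mon: "monoid (grp p S)" and S: "S \<subseteq> Gpn p Ahom n" and x: "x \<in> S" and L: "Lv k x"
  shows "Lv k (x [^]\<^bsub>grp p S\<^esub> m) \<and> fst ((x [^]\<^bsub>grp p S\<^esub> m) (Suc k)) = of_nat m * fst (x (Suc k))
      \<and> snd ((x [^]\<^bsub>grp p S\<^esub> m) k) = of_nat m * snd (x k)"
proof (induction m)
  case 0
  then show ?case using monoid.nat_pow_0[OF mon, of x] by (simp add: Lv_X XserF)
next
  case (Suc m)
  let ?u = "x [^]\<^bsub>grp p S\<^esub> m"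
  have uS: "?u \<in> S" using monoid.nat_pow_closed[OF mon, of x m] x by simp
  have e: "x [^]\<^bsub>grp p S\<^esub> Suc m = gmult p ?u x" using monoid.nat_pow_Suc[OF mon, of x m] by simp
  have Lu: "Lv k ?u" using Suc.IH by blast
  note st = pow_step[where u="?u" and v=x and p=p, OF p_pos[OF gca pr] ch[OF gca pr] S_props[OF S uS] S_props(2)[OF S x] Lu L]
  show ?case using st Suc e by (simp add: distrib_right)
qed

end


context
  fixes p :: nat and Ahom :: "int \<Rightarrow> 'a::ring_1 set" and n :: nat
  assumes gca: "graded_comm_algebra p Ahom" and pr: "prime p"
begin

lemma pow_pk:
  assumes mon: "monoid (grp p S)" and S: "S \<subseteq> Gpn p Ahom n" and x: "x \<in> S"
  shows "Lv k (x [^]\<^bsub>grp p S\<^esub> (p ^ k))"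
proof (induction k)
  case (Suc k)
  let ?u = "x [^]\<^bsub>grp p S\<^esub> (p ^ k)"
  have uS: "?u \<in> S" using monoid.nat_pow_closed[OF mon, of x] x by simp
  have e: "x [^]\<^bsub>grp p S\<^esub> (p ^ Suc k) = ?u [^]\<^bsub>grp p S\<^esub> p"
    using monoid.nat_pow_pow[OF mon, of x "p ^ k" p] x by (simp add: mult.commute)
  have P: "Lv k (?u [^]\<^bsub>grp p S\<^esub> p) \<and> fst ((?u [^]\<^bsub>grp p S\<^esub> p) (Suc k)) = 0
      \<and> snd ((?u [^]\<^bsub>grp p S\<^esub> p) k) = 0"
    using pow_L[OF gca pr mon S uS Suc.IH, of p] ch[OF gca pr] by simp
  have "Lv (Suc k) (?u [^]\<^bsub>grp p S\<^esub> p)"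
    using P unfolding Lv_def by (metis le_Suc_eq less_Suc_eq)
  then show ?case using e by simp
qed simp

lemma triv_Gpn:
  assumes "w \<in> Gpn p Ahom n" "Lv (Suc n) w"
  shows "w = Xser"
proof (rule ext, rule prod_eqI)
  fix i
  have w0: "fst (w 0) = 1" using assms(1) Gpn_Gp[OF gca pr] Gp_fst0[OF gca pr] by blast
  show "fst (w i) = fst (Xser i)"
    using assms w0 Gpn_trunc[OF gca pr assms(1), of i] by (cases "i = 0"; cases "i \<le> Suc n") (auto simp: Lv_def XserF)
  show "snd (w i) = snd (Xser i)"
    using assms Gpn_trunc[OF gca pr assms(1), of i] by (cases "i < Suc n") (auto simp: Lv_def)
qed

lemma triv_ev:
  assumes "w \<in> Gpn_ev p Ahom n" "Lv n w"
  shows "w = Xser"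
proof (rule ext, rule prod_eqI)
  fix i
  have wn: "w \<in> Gpn p Ahom n" and ev: "\<And>i. snd (w i) = 0" using assms(1) by (auto simp: Gpn_ev_def Gp_ev_def)
  have w0: "fst (w 0) = 1" using wn Gpn_Gp[OF gca pr] Gp_fst0[OF gca pr] by blast
  show "fst (w i) = fst (Xser i)"
    using assms w0 Gpn_trunc[OF gca pr wn, of i] by (cases "i = 0"; cases "i \<le> n") (auto simp: Lv_def XserF)
  show "snd (w i) = snd (Xser i)" using ev by simp
qed

lemma group_S:
  assumes S: "S \<subseteq> Gpn p Ahom n" and X: "Xser \<in> S" and cl: "\<And>x y. x \<in> S \<Longrightarrow> y \<in> S \<Longrightarrow> gmult p x y \<in> S"
  shows "group (grp p S)"
proof -
  have mon: "monoid (grp p S)" by (rule monoid_gen[OF gca pr S X cl])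
  show ?thesis
  proof (rule groupI)
    show "\<And>x y. x \<in> carrier (grp p S) \<Longrightarrow> y \<in> carrier (grp p S) \<Longrightarrow> x \<otimes>\<^bsub>grp p S\<^esub> y \<in> carrier (grp p S)"
      using monoid.m_closed[OF mon] by blast
    show "\<one>\<^bsub>grp p S\<^esub> \<in> carrier (grp p S)" using monoid.one_closed[OF mon] .
    show "\<And>x y z. x \<in> carrier (grp p S) \<Longrightarrow> y \<in> carrier (grp p S) \<Longrightarrow> z \<in> carrier (grp p S) \<Longrightarrow>
      x \<otimes>\<^bsub>grp p S\<^esub> y \<otimes>\<^bsub>grp p S\<^esub> z = x \<otimes>\<^bsub>grp p S\<^esub> (y \<otimes>\<^bsub>grp p S\<^esub> z)"
      using monoid.m_assoc[OF mon] by blast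
    show "\<And>x. x \<in> carrier (grp p S) \<Longrightarrow> \<one>\<^bsub>grp p S\<^esub> \<otimes>\<^bsub>grp p S\<^esub> x = x"
      using monoid.l_one[OF mon] by blast
    fix x assume "x \<in> carrier (grp p S)"
    then have x: "x \<in> S" by simp
    let ?N = "p ^ Suc n"
    have N: "Suc (?N - 1) = ?N" using p_pos[OF gca pr] by simp
    have "x [^]\<^bsub>grp p S\<^esub> ?N = Xser"
      using triv_Gpn[OF _ pow_pk[OF mon S x, of "Suc n"]] monoid.nat_pow_closed[OF mon, of x ?N] x S by auto
    moreover have "x [^]\<^bsub>grp p S\<^esub> (?N - 1) \<otimes>\<^bsub>grp p S\<^esub> x = x [^]\<^bsub>grp p S\<^esub> Suc (?N - 1)"
      by (rule monoid.nat_pow_Suc[OF mon, symmetric])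
    ultimately have "x [^]\<^bsub>grp p S\<^esub> (?N - 1) \<otimes>\<^bsub>grp p S\<^esub> x = \<one>\<^bsub>grp p S\<^esub>"
      unfolding N by simp
    then show "\<exists>y\<in>carrier (grp p S). y \<otimes>\<^bsub>grp p S\<^esub> x = \<one>\<^bsub>grp p S\<^esub>"
      using monoid.nat_pow_closed[OF mon, of x "?N - 1"] x by (intro bexI) auto
  qed
qed

lemma lcs_sub:
  assumes G: "group (grp p S)" and S: "S \<subseteq> Gpn p Ahom n"
  shows "lcs (grp p S) k \<subseteq> {w \<in> S. Lv k w}"
proof (induction k)
  case 0 then show ?case by simp
next
  case (Suc k)
  let ?G = "grp p S"
  have pp: "0 < p" by (rule p_pos[OF gca pr])
  have cc: "of_nat p = (0::'a)" by (rule ch[OF gca pr])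
  have inc: "h \<in> S \<and> Lv (Suc k) h"
    if hh: "h \<in> {x \<otimes>\<^bsub>?G\<^esub> y \<otimes>\<^bsub>?G\<^esub> inv\<^bsub>?G\<^esub> x \<otimes>\<^bsub>?G\<^esub> inv\<^bsub>?G\<^esub> y | x y. x \<in> lcs ?G k \<and> y \<in> carrier ?G}" for h
  proof -
    obtain x y where h: "h = x \<otimes>\<^bsub>?G\<^esub> y \<otimes>\<^bsub>?G\<^esub> inv\<^bsub>?G\<^esub> x \<otimes>\<^bsub>?G\<^esub> inv\<^bsub>?G\<^esub> y"
      and x: "x \<in> lcs ?G k" and y: "y \<in> carrier ?G" using hh by blast
    have xS: "x \<in> S" and Lx: "Lv k x" using x Suc.IH by auto
    have yS: "y \<in> S" using y by simp
    have hS: "h \<in> S" unfolding h using G xS yS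
      by (metis group.inv_closed grp_simps(1) monoid.m_closed group.is_monoid)
    have ci: "gmult p h (gmult p y x) = gmult p x y"
      using comm_ident[OF G, of x y] xS yS h by simp
    have yxS: "gmult p y x \<in> S" using group.is_monoid[OF G] monoid.m_closed xS yS by fastforce
    have ag: "agr (Suc k) (gmult p x y) (gmult p y x)"
      using comm_lemma[OF pp cc S_props(1)[OF gca pr S xS] S_props(1)[OF gca pr S yS] S_props(2)[OF gca pr S xS] S_props(2)[OF gca pr S yS] Lx] .
    have "Lv (Suc k) h"
      using conv_lemma[where c=h and v="gmult p y x" and p=p, OF pp cc S_props[OF gca pr S hS] S_props(2)[OF gca pr S yxS]] ag ci by simp
    then show ?thesis using hS by simp
  qed
  show ?case
  proof
    fix w assume "w \<in> lcs ?G (Suc k)"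
    then have "w \<in> generate ?G {x \<otimes>\<^bsub>?G\<^esub> y \<otimes>\<^bsub>?G\<^esub> inv\<^bsub>?G\<^esub> x \<otimes>\<^bsub>?G\<^esub> inv\<^bsub>?G\<^esub> y | x y. x \<in> lcs ?G k \<and> y \<in> carrier ?G}"
      by (simp only: lcs.simps)
    then show "w \<in> {w \<in> S. Lv (Suc k) w}"
    proof (induction rule: generate.induct)
      case one then show ?case using group.is_monoid[OF G] monoid.one_closed Lv_X by fastforce
    next
      case (incl h) then show ?case using inc by blast
    next
      case (inv h)
      have hS: "h \<in> S" and Lh: "Lv (Suc k) h" using inc[OF inv] by auto
      have ihS: "inv\<^bsub>?G\<^esub> h \<in> S" using group.inv_closed[OF G] hS by fastforce
      have e: "gmult p (inv\<^bsub>?G\<^esub> h) h = Xser" using group.l_inv[OF G] hS by fastforce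
      have "agr (Suc k) (gmult p (inv\<^bsub>?G\<^esub> h) h) h"
        unfolding e by (rule Lv_X_agr[OF Lh S_props(2)[OF gca pr S hS]])
      then have "Lv (Suc k) (inv\<^bsub>?G\<^esub> h)"
        by (rule conv_lemma[where c="inv\<^bsub>?G\<^esub> h" and v=h and p=p, OF pp cc S_props[OF gca pr S ihS] S_props(2)[OF gca pr S hS]])
      then show ?case using ihS by simp
    next
      case (eng h1 h2)
      have a: "h1 \<in> S" "Lv (Suc k) h1" "h2 \<in> S" "Lv (Suc k) h2" using eng by auto
      have "agr (Suc k) (gmult p h1 h2) h2"
        by (rule fwd_lemma[where c=h1 and v=h2 and p=p, OF pp cc S_props[OF gca pr S a(1)] S_props(2)[OF gca pr S a(3)] a(2)])
      then have "Lv (Suc k) (gmult p h1 h2)" using agr_Lv a(4) by blast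
      moreover have "gmult p h1 h2 \<in> S" using group.is_monoid[OF G] monoid.m_closed a by fastforce
      ultimately show ?case by simp
    qed
  qed
qed

lemma X_lcs: "group G \<Longrightarrow> \<one>\<^bsub>G\<^esub> \<in> lcs G k"
  by (cases k) (auto intro: generate.one group.is_monoid monoid.one_closed)

end


theorem theorem3p6:
  fixes p n :: nat and Ahom :: "int \<Rightarrow> 'a::ring_1 set"
  assumes "prime p" and "graded_comm_algebra p Ahom"
  shows "lcs (grp p (Gpn p Ahom n)) (Suc n) = {Xser}
         \<and> (odd p \<longrightarrow> lcs (grp p (Gpn_ev p Ahom n)) n = {Xser})"
proof -
  note gca = assms(2) and pr = assms(1)
  have G1: "group (grp p (Gpn p Ahom n))"
    by (rule group_S[OF gca pr subset_refl X_Gpn[OF gca pr] Gpn_mult[OF gca pr]])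
  have G2: "group (grp p (Gpn_ev p Ahom n))"
    by (rule group_S[OF gca pr Gpn_ev_sub[OF gca pr] X_Gpn_ev[OF gca pr] Gpn_ev_mult[OF gca pr]])
  have A: "lcs (grp p (Gpn p Ahom n)) (Suc n) = {Xser}"
  proof
    show "lcs (grp p (Gpn p Ahom n)) (Suc n) \<subseteq> {Xser}"
      using lcs_sub[OF gca pr G1 subset_refl, of "Suc n"] triv_Gpn[OF gca pr] by blast
    show "{Xser} \<subseteq> lcs (grp p (Gpn p Ahom n)) (Suc n)"
      using X_lcs[OF gca pr G1, of "Suc n"] by simp
  qed
  have B: "lcs (grp p (Gpn_ev p Ahom n)) n = {Xser}"
  proof
    show "lcs (grp p (Gpn_ev p Ahom n)) n \<subseteq> {Xser}"
      using lcs_sub[OF gca pr G2 Gpn_ev_sub[OF gca pr], of n] triv_ev[OF gca pr] by blast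
    show "{Xser} \<subseteq> lcs (grp p (Gpn_ev p Ahom n)) n"
      using X_lcs[OF gca pr G2, of n] by simp
  qed
  show ?thesis using A B by simp
qed


end
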